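(* Consider a two-bus network consisting of a single line with admittance $g-jb$ ($g,b\ge 0$) joining bus 1 and bus 2, where the voltage magnitudes $|V_1|,|V_2|>0$ are fixed. Let $\underline{\theta}\in[-\pi,0]$ and $\overline{\theta}\in[0,\pi]$, and let $\mathcal{P}\subset\mathbb{R}^2$ be the set of all points $(P_1,P_2)$ with $$P_1=|V_1|^2 g+|V_1||V_2| b\sin\theta-|V_1||V_2| g\cos\theta,\qquad P_2=|V_2|^2 g-|V_1||V_2| b\sin\theta-|V_1||V_2| g\cos\theta$$ obtained as $\theta$ ranges over $[\underline{\theta},\overline{\theta}]$. Then $\mathcal{O}(\mathcal{P})=\mathcal{O}(\mathrm{conv}(\mathcal{P}))$.
   Context: For a set $\mathcal{A}\subseteq\mathbb{R}^m$, a point $x\in\mathcal{A}$ is Pareto-optimal if there is no $y\in\mathcal{A}$ with $y\le x$ componentwise and strict inequality in at least one coordinate; $\mathcal{O}(\mathcal{A})$ denotes the set of Pareto-optimal points of $\mathcal{A}$. $\mathrm{conv}(\cdot)$ denotes the convex hull. Here $\theta=\theta_1-\theta_2$ is the difference of the voltage phase angles at the two buses, and $P_i$ is the real power injected at bus $i$. *)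

theory Defs
  imports "HOL-Analysis.Analysis"
begin

definition dominates :: "real \<times> real \<Rightarrow> real \<times> real \<Rightarrow> bool" where
  "dominates y x \<longleftrightarrow> fst y \<le> fst x \<and> snd y \<le> snd x \<and> (fst y < fst x \<or> snd y < snd x)"

definition pareto_set :: "(real \<times> real) set \<Rightarrow> (real \<times> real) set" where
  "pareto_set A = {x \<in> A. \<not> (\<exists>y\<in>A. dominates y x)}"

definition two_bus_injections ::
  "real \<Rightarrow> real \<Rightarrow> real \<Rightarrow> real \<Rightarrow> real \<Rightarrow> real \<times> real" where
  "two_bus_injections g b V1 V2 \<theta> =
     (V1^2 * g + V1 * V2 * b * sin \<theta> - V1 * V2 * g * cos \<theta>,
      V2^2 * g - V1 * V2 * b * sin \<theta> - V1 * V2 * g * cos \<theta>)"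

end

theory Submission
  imports Defs
begin

lemma sin_nonpos_neg: "-pi \<le> (x::real) \<Longrightarrow> x \<le> 0 \<Longrightarrow> sin x \<le> 0"
  using sin_ge_zero[of "-x"] by simp

lemma poly_id:
  fixes sa ca ss cs R c1 c2 t :: real
  shows "(sa * cs - ca * ss) * (c1 + R * sa * ss - R * ca * cs - t)
     + (sa * cs + ca * ss) * (c2 - R * sa * ss - R * ca * cs - t)
   = (sa * cs - ca * ss) * c1 + (sa * cs + ca * ss) * c2 - 2 * R * sa * ca * (cs * cs + ss * ss) - t * (2 * sa * cs)"
  by (simp add: algebra_simps)

lemma core:
  fixes B G c1 c2 lo hi y1 y2 :: real
  assumes B0: "B \<ge> 0" and G0: "G \<ge> 0" and lo1: "-pi \<le> lo" and lo2: "lo \<le> 0"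
    and hi1: "0 \<le> hi" and hi2: "hi \<le> pi"
    and H: "\<And>l1 l2. l1 \<ge> 0 \<Longrightarrow> l2 \<ge> 0 \<Longrightarrow> \<exists>\<theta>\<in>{lo..hi}.
        l1*(c1 + B * sin \<theta> - G * cos \<theta>) + l2*(c2 - B * sin \<theta> - G * cos \<theta>) \<le> l1*y1 + l2*y2"
  shows "\<exists>\<theta>\<in>{lo..hi}. c1 + B * sin \<theta> - G * cos \<theta> \<le> y1 \<and> c2 - B * sin \<theta> - G * cos \<theta> \<le> y2"
proof (rule ccontr)
  assume nt: "\<not> ?thesis"
  define f1 where "f1 = (\<lambda>\<theta>. c1 + B * sin \<theta> - G * cos \<theta>)"
  define f2 where "f2 = (\<lambda>\<theta>. c2 - B * sin \<theta> - G * cos \<theta>)"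
  have nt': "\<And>\<theta>. \<theta> \<in> {lo..hi} \<Longrightarrow> f1 \<theta> > y1 \<or> f2 \<theta> > y2"
    using nt unfolding f1_def f2_def by force
  obtain \<theta>1 where t1: "\<theta>1 \<in> {lo..hi}" "f1 \<theta>1 \<le> y1"
    using H[of 1 0] unfolding f1_def by auto
  obtain \<theta>2 where t2: "\<theta>2 \<in> {lo..hi}" "f2 \<theta>2 \<le> y2"
    using H[of 0 1] unfolding f2_def by auto
  have "f2 \<theta>1 > y2" using nt'[OF t1(1)] t1(2) by auto
  have "f1 \<theta>2 > y1" using nt'[OF t2(1)] t2(2) by auto
  define k where "k = y1 - y2 - c1 + c2"
  have k1: "2*B * sin \<theta>1 < k" using \<open>f2 \<theta>1 > y2\<close> t1(2) unfolding f1_def f2_def k_def by auto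
  have k2: "2*B * sin \<theta>2 > k" using \<open>f1 \<theta>2 > y1\<close> t2(2) unfolding f1_def f2_def k_def by auto
  have Bp: "B > 0"
  proof (rule ccontr)
    assume "\<not> B > 0" then have "B = 0" using B0 by auto
    then show False using k1 k2 by auto
  qed
  have "-1 \<le> sin \<theta>1" "sin \<theta>2 \<le> 1" by auto
  have "B * sin \<theta>1 \<ge> B * (-1)" "B * sin \<theta>2 \<le> B * 1"
    using Bp \<open>-1 \<le> sin \<theta>1\<close> \<open>sin \<theta>2 \<le> 1\<close> by (intro mult_left_mono; simp)+
  then have "-(2*B) < k \<and> k < 2*B"
    using k1 k2 by linarith
  then have kb1: "-1 < k/(2*B)" and kb2: "k/(2*B) < 1"
    using Bp by (auto simp: field_simps)
  define s where "s = arcsin (k/(2*B))"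
  have ss: "sin s = k/(2*B)" unfolding s_def using kb1 kb2 by (simp add: sin_arcsin)
  have sb1: "-(pi/2) \<le> s" and sb2: "s \<le> pi/2" unfolding s_def using kb1 kb2
    using arcsin_bounded[of "k/(2*B)"] by auto
  have sk: "2*B * sin s = k" using ss Bp by simp
  have s_lo: "lo \<le> s"
  proof (rule ccontr)
    assume "\<not> lo \<le> s"
    then have "\<theta>1 > s" "s < 0" using t1(1) lo2 by auto
    have "sin \<theta>1 \<ge> sin s"
    proof (cases "\<theta>1 \<le> pi/2")
      case True then show ?thesis using sin_monotone_2pi_le[of s \<theta>1] sb1 \<open>\<theta>1 > s\<close> by auto
    next
      case False
      then have "sin \<theta>1 \<ge> 0" using t1(1) hi2 by (intro sin_ge_zero) auto
      moreover have "sin s \<le> 0" using sin_nonpos_neg[of s] sb1 \<open>s < 0\<close> by auto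
      ultimately show ?thesis by auto
    qed
    then have "2*B * sin \<theta>1 \<ge> 2*B * sin s" using Bp by auto
    then show False using k1 sk by auto
  qed
  have s_hi: "s \<le> hi"
  proof (rule ccontr)
    assume "\<not> s \<le> hi"
    then have "\<theta>2 < s" "s > 0" using t2(1) hi1 by auto
    have "sin \<theta>2 \<le> sin s"
    proof (cases "\<theta>2 \<ge> -(pi/2)")
      case True then show ?thesis using sin_monotone_2pi_le[of \<theta>2 s] sb2 \<open>\<theta>2 < s\<close> by auto
    next
      case False
      then have "sin \<theta>2 \<le> 0" using t2(1) lo1 by (intro sin_nonpos_neg) auto
      moreover have "sin s \<ge> 0" using sin_ge_zero[of s] sb2 \<open>s > 0\<close> by auto
      ultimately show ?thesis by auto
    qed
    then have "2*B * sin \<theta>2 \<le> 2*B * sin s" using Bp by auto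
    then show False using k2 sk by auto
  qed
  define t where "t = f1 s - y1"
  have t2eq: "f2 s - y2 = t" using sk unfolding t_def f1_def f2_def k_def by auto
  have tp: "t > 0" using nt'[of s] s_lo s_hi t2eq unfolding t_def by auto
  define R where "R = sqrt (B^2 + G^2)"
  have Rp: "R > 0" unfolding R_def using Bp by (simp add: add_pos_nonneg)
  have R2: "R^2 = B^2 + G^2" unfolding R_def by simp
  have "(G/R)^2 + (B/R)^2 = 1" using R2 Rp Bp by (simp add: power_divide add_divide_distrib[symmetric])
  then obtain \<alpha> where al: "0 \<le> \<alpha>" "\<alpha> \<le> pi/2" "G/R = cos \<alpha>" "B/R = sin \<alpha>"
    using sincos_total_pi_half[of "G/R" "B/R"] B0 G0 Rp by auto
  have Geq: "G = R * cos \<alpha>" and Beq: "B = R * sin \<alpha>" using al Rp by (auto simp: field_simps)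
  have sc: "sin \<alpha> ^ 2 + cos \<alpha> ^ 2 = 1" by simp
  have f2min: "\<And>\<theta>. f2 \<theta> \<ge> c2 - R"
  proof -
    fix \<theta>
    have "f2 \<theta> = c2 - R * cos (\<theta> - \<alpha>)" unfolding f2_def Geq Beq cos_diff by (simp add: algebra_simps)
    then show "f2 \<theta> \<ge> c2 - R" using Rp by (simp add: mult_left_le)
  qed
  have f2al: "f2 \<alpha> = c2 - R"
  proof -
    have h: "R*(cos \<alpha> * cos \<alpha> + sin \<alpha> * sin \<alpha>) = R" by (simp only: sin_cos_squared_add3 mult_1_right)
    show ?thesis unfolding f1_def f2_def Geq Beq using h[unfolded distrib_left] by (simp add: algebra_simps)
  qed
  have f1min: "\<And>\<theta>. f1 \<theta> \<ge> c1 - R"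
  proof -
    fix \<theta>
    have "f1 \<theta> = c1 - R * cos (\<theta> + \<alpha>)" unfolding f1_def Geq Beq cos_add by (simp add: algebra_simps)
    then show "f1 \<theta> \<ge> c1 - R" using Rp by (simp add: mult_left_le)
  qed
  have f1al: "f1 (-\<alpha>) = c1 - R"
  proof -
    have h: "R*(cos \<alpha> * cos \<alpha> + sin \<alpha> * sin \<alpha>) = R" by (simp only: sin_cos_squared_add3 mult_1_right)
    show ?thesis unfolding f1_def f2_def Geq Beq using h[unfolded distrib_left] by (simp add: algebra_simps)
  qed
  consider "s > \<alpha>" | "s < -\<alpha>" | "-\<alpha> \<le> s \<and> s \<le> \<alpha>" by linarith
  then show False
  proof cases
    case 1
    have aI: "\<alpha> \<in> {lo..hi}" using al 1 s_hi lo2 by auto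
    have "sin \<alpha> < sin s" using sin_monotone_2pi[of \<alpha> s] al 1 sb2 by auto
    then have "2*B * sin \<alpha> < k" using Bp sk by auto
    moreover have "f2 \<alpha> \<le> y2" using f2al f2min[of \<theta>2] t2(2) by auto
    ultimately have "f1 \<alpha> \<le> y1" unfolding f1_def f2_def k_def by auto
    then show False using nt'[OF aI] \<open>f2 \<alpha> \<le> y2\<close> by auto
  next
    case 2
    have aI: "-\<alpha> \<in> {lo..hi}" using al 2 s_lo hi1 by auto
    have "sin (-\<alpha>) > sin s" using sin_monotone_2pi[of s "-\<alpha>"] al 2 sb1 by auto
    then have "2*B * sin (-\<alpha>) > k" using Bp sk by (auto simp del: sin_minus)
    moreover have "f1 (-\<alpha>) \<le> y1" using f1al f1min[of \<theta>1] t1(2) by auto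
    ultimately have "f2 (-\<alpha>) \<le> y2" unfolding f1_def f2_def k_def by auto
    then show False using nt'[OF aI] \<open>f1 (-\<alpha>) \<le> y1\<close> by auto
  next
    case 3
    show False
    proof (cases "G = 0")
      case True
      obtain \<theta> where "\<theta> \<in> {lo..hi}" "1*(c1 + B * sin \<theta> - G * cos \<theta>) + 1*(c2 - B * sin \<theta> - G * cos \<theta>) \<le> 1*y1 + 1*y2"
        using H[of 1 1] by auto
      then have "c1 + c2 \<le> y1 + y2" using True by auto
      moreover have "y1 + y2 = c1 + c2 - 2*t" using t_def t2eq True unfolding f1_def f2_def by auto
      ultimately show False using tp by auto
    next
      case False
      then have "cos \<alpha> > 0" using al(3) G0 Rp by (metis divide_pos_pos less_eq_real_def)
      then have "\<alpha> < pi/2" using al(2) cos_pi_half by (metis less_eq_real_def less_irrefl)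
      have "sin \<alpha> > 0" using al(4) Bp Rp by (metis divide_pos_pos)
      have cs: "cos s > 0" using 3 \<open>\<alpha> < pi/2\<close> by (intro cos_gt_zero_pi) auto
      define l1 where "l1 = sin \<alpha> * cos s - cos \<alpha> * sin s"
      define l2 where "l2 = sin \<alpha> * cos s + cos \<alpha> * sin s"
      have "l1 = sin (\<alpha> - s)" unfolding l1_def sin_diff by simp
      then have l1p: "l1 \<ge> 0" using 3 \<open>\<alpha> < pi/2\<close> by (auto intro!: sin_ge_zero)
      have "l2 = sin (\<alpha> + s)" unfolding l2_def sin_add by simp
      then have l2p: "l2 \<ge> 0" using 3 \<open>\<alpha> < pi/2\<close> by (auto intro!: sin_ge_zero)
      obtain \<theta> where th: "l1*(c1 + B * sin \<theta> - G * cos \<theta>) + l2*(c2 - B * sin \<theta> - G * cos \<theta>) \<le> l1*y1 + l2*y2"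
        using H[OF l1p l2p] by auto
      define K where "K = 2*R * sin \<alpha> * cos \<alpha>"
      have Kp: "K \<ge> 0" unfolding K_def using Rp \<open>sin \<alpha> > 0\<close> \<open>cos \<alpha> > 0\<close> by auto
      have e1: "l1*(c1 + B * sin \<theta> - G * cos \<theta>) + l2*(c2 - B * sin \<theta> - G * cos \<theta>)
           = l1*c1 + l2*c2 - K * cos (\<theta> - s)"
        unfolding l1_def l2_def K_def Beq Geq cos_diff by (simp add: algebra_simps)
      have ss2: "sin s ^ 2 + cos s ^ 2 = 1" by simp
      have e2: "l1*y1 + l2*y2 = l1*c1 + l2*c2 - K - t*(2 * sin \<alpha> * cos s)"
      proof -
        have hy1: "y1 = c1 + R * sin \<alpha> * sin s - R * cos \<alpha> * cos s - t"
          using t_def unfolding f1_def Beq Geq by simp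
        have hy2: "y2 = c2 - R * sin \<alpha> * sin s - R * cos \<alpha> * cos s - t"
          using t2eq unfolding f2_def Beq Geq by simp
        have "l1*y1 + l2*y2 = l1*c1 + l2*c2 - K*(cos s * cos s + sin s * sin s) - t*(2 * sin \<alpha> * cos s)"
          unfolding hy1 hy2 l1_def l2_def K_def by (rule poly_id)
        then show ?thesis by (simp only: sin_cos_squared_add3 mult_1_right)
      qed
      have "K * cos (\<theta> - s) \<le> K" using Kp by (simp add: mult_left_le)
      moreover have "t*(2 * sin \<alpha> * cos s) > 0" using tp \<open>sin \<alpha> > 0\<close> cs by auto
      ultimately show False using th e1 e2 by linarith
    qed
  qed
qed

lemma hull_halfspace:
  fixes P :: "(real \<times> real) set"
  assumes "y \<in> convex hull P"
  shows "\<exists>p\<in>P. l1 * fst p + l2 * snd p \<le> l1 * fst y + l2 * snd y"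
proof (rule ccontr)
  assume "\<not> ?thesis"
  then have "P \<subseteq> {z. inner (l1, l2) z > l1 * fst y + l2 * snd y}"
    by (auto simp: inner_prod_def not_le)
  then have "convex hull P \<subseteq> {z. inner (l1, l2) z > l1 * fst y + l2 * snd y}"
    by (rule hull_minimal) (rule convex_halfspace_gt)
  then show False using assms by (auto simp: inner_prod_def)
qed

theorem lemma1:
  fixes g b V1 V2 \<theta>lo \<theta>hi :: real
  assumes "g \<ge> 0" and "b \<ge> 0"
    and "V1 > 0" and "V2 > 0"
    and "-pi \<le> \<theta>lo" and "\<theta>lo \<le> 0"
    and "0 \<le> \<theta>hi" and "\<theta>hi \<le> pi"
  defines "P \<equiv> two_bus_injections g b V1 V2 ` {\<theta>lo..\<theta>hi}"
  shows "pareto_set P = pareto_set (convex hull P)"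
proof -
  have low: "\<exists>p\<in>P. fst p \<le> fst y \<and> snd p \<le> snd y" if y: "y \<in> convex hull P" for y
  proof -
    have "\<exists>\<theta>\<in>{\<theta>lo..\<theta>hi}. V1^2 * g + (V1 * V2 * b) * sin \<theta> - (V1 * V2 * g) * cos \<theta> \<le> fst y
       \<and> V2^2 * g - (V1 * V2 * b) * sin \<theta> - (V1 * V2 * g) * cos \<theta> \<le> snd y"
    proof (rule core)
      show "0 \<le> V1 * V2 * b" "0 \<le> V1 * V2 * g" using assms by auto
      fix l1 l2 :: real
      obtain p where "p \<in> P" "l1 * fst p + l2 * snd p \<le> l1 * fst y + l2 * snd y"
        using hull_halfspace[OF y] by blast
      then show "\<exists>\<theta>\<in>{\<theta>lo..\<theta>hi}. l1 * (V1^2 * g + (V1 * V2 * b) * sin \<theta> - (V1 * V2 * g) * cos \<theta>)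
         + l2 * (V2^2 * g - (V1 * V2 * b) * sin \<theta> - (V1 * V2 * g) * cos \<theta>) \<le> l1 * fst y + l2 * snd y"
        unfolding P_def two_bus_injections_def by auto
    qed (use assms in auto)
    then show ?thesis unfolding P_def two_bus_injections_def by force
  qed
  have sub: "P \<subseteq> convex hull P" by (rule hull_subset)
  show ?thesis
  proof
    show "pareto_set P \<subseteq> pareto_set (convex hull P)"
    proof
      fix x assume x: "x \<in> pareto_set P"
      show "x \<in> pareto_set (convex hull P)"
      proof (rule ccontr)
        assume "x \<notin> pareto_set (convex hull P)"
        then obtain y where y: "y \<in> convex hull P" "dominates y x"
          using x sub unfolding pareto_set_def by auto
        obtain p where "p \<in> P" "fst p \<le> fst y" "snd p \<le> snd y" using low[OF y(1)] by auto
        then have "dominates p x" using y(2) unfolding dominates_def by auto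
        then show False using x \<open>p \<in> P\<close> unfolding pareto_set_def by auto
      qed
    qed
  next
    show "pareto_set (convex hull P) \<subseteq> pareto_set P"
    proof
      fix x assume x: "x \<in> pareto_set (convex hull P)"
      then have xh: "x \<in> convex hull P" unfolding pareto_set_def by auto
      obtain p where p: "p \<in> P" "fst p \<le> fst x" "snd p \<le> snd x" using low[OF xh] by auto
      have "\<not> dominates p x" using x p(1) sub unfolding pareto_set_def by auto
      then have "p = x" using p unfolding dominates_def by (auto simp: prod_eq_iff)
      then show "x \<in> pareto_set P" using x p(1) sub unfolding pareto_set_def by auto
    qed
  qed
qed

end
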